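(* For every 5-complex number $u$, $$e^u=e_+e^{v_+}+e^{v_1}\left(e_1\cos\tilde v_1+\tilde e_1\sin\tilde v_1\right)+e^{v_2}\left(e_2\cos\tilde v_2+\tilde e_2\sin\tilde v_2\right),$$ where $e^u=\sum_{n\ge0}u^n/n!$.
   Context: A 5-complex number is $u=x_0+h_1x_1+h_2x_2+h_3x_3+h_4x_4$ with real $x_j$, with componentwise addition and the commutative associative bilinear multiplication determined by $h_jh_k=h_{(j+k)\bmod 5}$, $h_0=1$. Canonical variables: $v_+=\sum_jx_j$ and, for $k=1,2$, $v_k=\sum_jx_j\cos(2\pi kj/5)$, $\tilde v_k=\sum_jx_j\sin(2\pi kj/5)$. Canonical basis (with $h_0=1$): $e_+=\frac15\sum_{j=0}^4h_j$, and for $k=1,2$: $e_k=\frac25\sum_{j=0}^4\cos(2\pi kj/5)h_j$, $\tilde e_k=\frac25\sum_{j=0}^4\sin(2\pi kj/5)h_j$. *)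

theory Defs
  imports "HOL-Analysis.Analysis" "HOL-Library.Numeral_Type"
begin

text \<open>A 5-complex number u = x0 + h1 x1 + ... + h4 x4 is represented by its
  coefficient vector in real^5, indexed by the ring Z/5Z (numeral type 5).\<close>

type_synonym tc5 = "real ^ 5"

definition comp5 :: "tc5 \<Rightarrow> nat \<Rightarrow> real" where
  "comp5 u j = u $ (of_nat j :: 5)"

definition hb :: "nat \<Rightarrow> tc5" where
  "hb j = (\<chi> k. if k = (of_nat j :: 5) then 1 else 0)"

text \<open>Multiplication determined bilinearly by h_j h_k = h_((j+k) mod 5).\<close>
definition mul5 :: "tc5 \<Rightarrow> tc5 \<Rightarrow> tc5" where
  "mul5 u v = (\<chi> k. \<Sum>i\<in>UNIV. u $ i * v $ (k - i))"

primrec pow5 :: "tc5 \<Rightarrow> nat \<Rightarrow> tc5" where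
  "pow5 u 0 = hb 0"
| "pow5 u (Suc n) = mul5 u (pow5 u n)"

definition vplus :: "tc5 \<Rightarrow> real" where
  "vplus u = (\<Sum>j<5. comp5 u j)"

definition vk :: "nat \<Rightarrow> tc5 \<Rightarrow> real" where
  "vk k u = (\<Sum>j<5. comp5 u j * cos (2 * pi * real k * real j / 5))"

definition vtk :: "nat \<Rightarrow> tc5 \<Rightarrow> real" where
  "vtk k u = (\<Sum>j<5. comp5 u j * sin (2 * pi * real k * real j / 5))"

definition eplus :: tc5 where
  "eplus = (1/5) *\<^sub>R (\<Sum>j<5. hb j)"

definition ek :: "nat \<Rightarrow> tc5" where
  "ek k = (2/5) *\<^sub>R (\<Sum>j<5. cos (2 * pi * real k * real j / 5) *\<^sub>R hb j)"

definition etk :: "nat \<Rightarrow> tc5" where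
  "etk k = (2/5) *\<^sub>R (\<Sum>j<5. sin (2 * pi * real k * real j / 5) *\<^sub>R hb j)"

end

theory Submission
  imports Defs
begin

lemma U5: "(UNIV :: 5 set) = {0,1,2,3,4}" 
proof -
  have "x \<in> {0,1,2,3,4}" for x :: 5
  proof (cases x rule: bit1_cases)
    case (of_int z)
    then have "z = 0 \<or> z = 1 \<or> z = 2 \<or> z = 3 \<or> z = 4" by auto
    then show ?thesis using of_int by auto
  qed
  then show ?thesis by auto
qed

lemma sumU5: "(\<Sum>i\<in>(UNIV::5 set). f i) = f 0 + f 1 + f 2 + f 3 + f 4"
  unfolding U5 apply (subst sum.insert, simp, simp)+
  by (simp add: add.assoc)

definition "c1 = cos (2*pi/5)"
definition "tA = sin (2*pi/5)"
definition "c2 = cos (4*pi/5)"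
definition "tB = sin (4*pi/5)"

lemma trig_vals:
  "cos (6*pi/5) = c2" "sin (6*pi/5) = - tB"
  "cos (8*pi/5) = c1" "sin (8*pi/5) = - tA"
  "cos (12*pi/5) = c1" "sin (12*pi/5) = tA"
  "cos (16*pi/5) = c2" "sin (16*pi/5) = - tB"
proof -
  have a: "6*pi/5 = 2*pi - 4*pi/5" "8*pi/5 = 2*pi - 2*pi/5"
     "12*pi/5 = 2*pi/5 + 2*pi" "16*pi/5 = (2*pi - 4*pi/5) + 2*pi" by simp_all
  show "cos (6*pi/5) = c2" "sin (6*pi/5) = - tB"
  "cos (8*pi/5) = c1" "sin (8*pi/5) = - tA"
  "cos (12*pi/5) = c1" "sin (12*pi/5) = tA"
  "cos (16*pi/5) = c2" "sin (16*pi/5) = - tB"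
    unfolding a c1_def c2_def tA_def tB_def
    by (simp_all only: cos_periodic sin_periodic cos_2pi_minus sin_2pi_minus)
qed

lemma c2_eq: "c2 = 2*c1^2 - 1" and s2_eq: "tB = 2*tA*c1" and pyth: "c1^2 + tA^2 = 1"
proof -
  have a: "4*pi/5 = 2*(2*pi/5)" by simp
  show "c2 = 2*c1^2 - 1" unfolding c2_def c1_def a by (rule cos_double_cos)
  show "tB = 2*tA*c1" unfolding tB_def tA_def c1_def a by (rule sin_double)
  show "c1^2 + tA^2 = 1" unfolding tA_def c1_def by simp
qed

lemma key_sum: "1 + 2*c1 + 2*c2 = 0"
proof -
  define z where "z = cis (2*pi/5)"
  have tApos: "tA > 0" unfolding tA_def by (rule sin_gt_zero) auto
  have z1: "z \<noteq> 1" using tApos unfolding z_def tA_def by (auto simp: complex_eq_iff)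
  have "z^5 = cis (real 5 * (2*pi/5))" unfolding z_def by (rule Complex.DeMoivre)
  also have "\<dots> = 1" by simp
  finally have "z^5 = 1" .
  then have "(z - 1) * (1 + z + z^2 + z^3 + z^4) = 0" by algebra
  with z1 have "1 + z + z^2 + z^3 + z^4 = 0" by simp
  then have "Re (1 + z + z^2 + z^3 + z^4) = 0" by simp
  moreover have "Re (1 + z + z^2 + z^3 + z^4) = 1 + cos (2*pi/5) + cos (4*pi/5) + cos (6*pi/5) + cos (8*pi/5)"
    unfolding z_def Complex.DeMoivre by simp
  ultimately show ?thesis using trig_vals unfolding c1_def c2_def by simp
qed

lemma vk1: "vk 1 w = w$0 + w$1*c1 + w$2*c2 + w$3*c2 + w$4*c1"
  unfolding vk_def comp5_def by (simp add: eval_nat_numeral trig_vals c1_def c2_def)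
lemma vtk1: "vtk 1 w = w$1*tA + w$2*tB - w$3*tB - w$4*tA"
  unfolding vtk_def comp5_def by (simp add: eval_nat_numeral trig_vals tA_def tB_def)
lemma vk2: "vk 2 w = w$0 + w$1*c2 + w$2*c1 + w$3*c1 + w$4*c2"
  unfolding vk_def comp5_def by (simp add: eval_nat_numeral trig_vals c1_def c2_def)
lemma vtk2: "vtk 2 w = w$1*tB - w$2*tA + w$3*tA - w$4*tB"
  unfolding vtk_def comp5_def by (simp add: eval_nat_numeral trig_vals tA_def tB_def)
lemma vplus: "vplus w = w$0 + w$1 + w$2 + w$3 + w$4"
  unfolding vplus_def comp5_def by (simp add: eval_nat_numeral)
lemma eplus_ex: "eplus = (1/5) *\<^sub>R (hb 0 + hb 1 + hb 2 + hb 3 + hb 4)"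
  unfolding eplus_def by (simp add: eval_nat_numeral)
lemma ek1: "ek 1 = (2/5) *\<^sub>R (hb 0 + c1 *\<^sub>R hb 1 + c2 *\<^sub>R hb 2 + c2 *\<^sub>R hb 3 + c1 *\<^sub>R hb 4)"
  unfolding ek_def by (simp add: eval_nat_numeral trig_vals c1_def c2_def)
lemma ek2: "ek 2 = (2/5) *\<^sub>R (hb 0 + c2 *\<^sub>R hb 1 + c1 *\<^sub>R hb 2 + c1 *\<^sub>R hb 3 + c2 *\<^sub>R hb 4)"
  unfolding ek_def by (simp add: eval_nat_numeral trig_vals c1_def c2_def)
lemma etk1: "etk 1 = (2/5) *\<^sub>R (tA *\<^sub>R hb 1 + tB *\<^sub>R hb 2 - tB *\<^sub>R hb 3 - tA *\<^sub>R hb 4)"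
  unfolding etk_def by (simp add: eval_nat_numeral trig_vals tA_def tB_def)
lemma etk2: "etk 2 = (2/5) *\<^sub>R (tB *\<^sub>R hb 1 - tA *\<^sub>R hb 2 + tA *\<^sub>R hb 3 - tB *\<^sub>R hb 4)"
  unfolding etk_def by (simp add: eval_nat_numeral trig_vals tA_def tB_def)
lemma hbc: "hb 0 $ m = (if m = 0 then 1 else 0)" "hb 1 $ m = (if m = 1 then 1 else 0)"
  "hb 2 $ m = (if m = 2 then 1 else 0)" "hb 3 $ m = (if m = 3 then 1 else 0)"
  "hb 4 $ m = (if m = 4 then 1 else 0)" "hb (Suc 0) $ m = (if m = 1 then 1 else 0)"
  unfolding hb_def by simp_all
lemma in5: "m = 0 \<or> m = 1 \<or> m = 2 \<or> m = 3 \<or> (m::5) = 4"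
proof -
  have "m \<in> UNIV" by simp
  then have "m \<in> {0,1,2,3,4}" by (subst (asm) U5)
  then show ?thesis by simp
qed
lemma t1: "\<forall>m::5. P m \<Longrightarrow> P 0 \<and> P 1 \<and> P 2 \<and> P 3 \<and> P 4" 
  apply (intro conjI) apply (erule spec)+ done
lemma t2: "P 0 \<and> P 1 \<and> P 2 \<and> P 3 \<and> P 4 \<Longrightarrow> P (m::5)" 
  using in5[of m] apply (elim disjE conjE) apply (simp_all only:) done
lemma all5: "(\<forall>m::5. P m) \<longleftrightarrow> P 0 \<and> P 1 \<and> P 2 \<and> P 3 \<and> P 4"
  apply (rule iffI) apply (erule t1) apply (rule allI) apply (erule t2) done
lemma quad: "4*c1^2 + 2*c1 - 1 = 0" using key_sum c2_eq by simp


lemma recon: "w = vplus w *\<^sub>R eplus + vk 1 w *\<^sub>R ek 1 + vtk 1 w *\<^sub>R etk 1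
   + vk 2 w *\<^sub>R ek 2 + vtk 2 w *\<^sub>R etk 2"
  unfolding vec_eq_iff all5 vplus vk1 vk2 vtk1 vtk2 eplus_ex ek1 ek2 etk1 etk2
  apply (simp add: hbc c2_eq s2_eq)
  apply (intro conjI)
  using quad pyth 
  by algebra+

definition phi :: "nat \<Rightarrow> tc5 \<Rightarrow> complex" where
  "phi k w = (\<Sum>j<5. complex_of_real (comp5 w j) * cis (2*pi*real k/5) ^ j)"

lemma phi_Re: "Re (phi k w) = vk k w"
  unfolding phi_def vk_def Re_sum
proof (intro sum.cong refl)
  fix j assume "j \<in> {..<5::nat}"
  have "real j * (2*pi*real k/5) = 2*pi*real k*real j/5" by simp
  then show "Re (complex_of_real (comp5 w j) * cis (2*pi*real k/5) ^ j) = comp5 w j * cos (2*pi*real k*real j/5)"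
    by (simp add: Complex.DeMoivre mult_ac)
qed

lemma phi_Im: "Im (phi k w) = vtk k w"
  unfolding phi_def vtk_def Im_sum
proof (intro sum.cong refl)
  fix j assume "j \<in> {..<5::nat}"
  have "real j * (2*pi*real k/5) = 2*pi*real k*real j/5" by simp
  then show "Im (complex_of_real (comp5 w j) * cis (2*pi*real k/5) ^ j) = comp5 w j * sin (2*pi*real k*real j/5)"
    by (simp add: Complex.DeMoivre mult_ac)
qed

lemma phi_scale: "phi k (c *\<^sub>R w) = complex_of_real c * phi k w"
  unfolding phi_def comp5_def by (simp add: sum_distrib_left mult.assoc)

lemma sum5: "(\<Sum>j<(5::nat). f j) = f 0 + f 1 + f 2 + f 3 + f 4"
  by (simp add: eval_nat_numeral)

lemma phi_ex: "phi k w = complex_of_real (w$0) + complex_of_real (w$1) * cis (2*pi*real k/5)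
   + complex_of_real (w$2) * cis (2*pi*real k/5)^2 + complex_of_real (w$3) * cis (2*pi*real k/5)^3
   + complex_of_real (w$4) * cis (2*pi*real k/5)^4"
  unfolding phi_def sum5 comp5_def by simp

lemma neg5: "(-1::5) = 4" "(-2::5) = 3" "(-3::5) = 2" "(-4::5) = 1"
  by (simp_all add: minus_equation_iff)
lemma big5: "(5::5) = 0" "(6::5) = 1" "(7::5) = 2" "(8::5) = 3" "(9::5) = 4"
  by simp_all

lemma mulc: fixes u v :: tc5 shows
  "mul5 u v $ 0 = u$0 * v$0 + u$1 * v$4 + u$2 * v$3 + u$3 * v$2 + u$4 * v$1"
  "mul5 u v $ 1 = u$0 * v$1 + u$1 * v$0 + u$2 * v$4 + u$3 * v$3 + u$4 * v$2"
  "mul5 u v $ 2 = u$0 * v$2 + u$1 * v$1 + u$2 * v$0 + u$3 * v$4 + u$4 * v$3"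
  "mul5 u v $ 3 = u$0 * v$3 + u$1 * v$2 + u$2 * v$1 + u$3 * v$0 + u$4 * v$4"
  "mul5 u v $ 4 = u$0 * v$4 + u$1 * v$3 + u$2 * v$2 + u$3 * v$1 + u$4 * v$0"
  unfolding mul5_def by (simp_all only: vec_lambda_beta sumU5) (simp_all add: neg5 big5)

lemma conv5: fixes z :: complex assumes "z^5 = 1" shows
  "(a0 + a1*z + a2*z^2 + a3*z^3 + a4*z^4) * (b0 + b1*z + b2*z^2 + b3*z^3 + b4*z^4) =
   (a0*b0 + a1*b4 + a2*b3 + a3*b2 + a4*b1) + (a0*b1 + a1*b0 + a2*b4 + a3*b3 + a4*b2)*z
   + (a0*b2 + a1*b1 + a2*b0 + a3*b4 + a4*b3)*z^2 + (a0*b3 + a1*b2 + a2*b1 + a3*b0 + a4*b4)*z^3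
   + (a0*b4 + a1*b3 + a2*b2 + a3*b1 + a4*b0)*z^4"
  using assms by algebra

lemma phi_mul: "phi k (mul5 u v) = phi k u * phi k v"
proof -
  define z where "z = cis (2*pi*real k/5)"
  have e: "real 5 * (2*pi*real k/5) = 2*pi*real k" by simp
  have z5: "z^5 = 1" unfolding z_def Complex.DeMoivre e by (rule cis_multiple_2pi) simp
  show ?thesis
    unfolding phi_ex z_def[symmetric] conv5[OF z5] mulc of_real_add of_real_mult ..
qed

lemma phi_one: "phi k (hb 0) = 1"
  unfolding phi_def comp5_def hb_def by (simp add: eval_nat_numeral)

lemma phi_pow: "phi k (pow5 u n) = phi k u ^ n"
  by (induction n) (simp_all add: phi_one phi_mul)

lemma vk_term: "vk k ((1 / fact n) *\<^sub>R pow5 u n) = Re ((phi k u)^n /\<^sub>R fact n)"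
proof -
  have "vk k ((1 / fact n) *\<^sub>R pow5 u n) = Re (phi k ((1 / fact n) *\<^sub>R pow5 u n))"
    by (simp only: phi_Re)
  also have "\<dots> = Re (complex_of_real (1 / fact n) * (phi k u)^n)"
    by (simp only: phi_scale phi_pow)
  also have "\<dots> = Re ((phi k u)^n /\<^sub>R fact n)"
    by (simp only: scaleR_conv_of_real divide_inverse mult_1)
  finally show ?thesis .
qed

lemma vtk_term: "vtk k ((1 / fact n) *\<^sub>R pow5 u n) = Im ((phi k u)^n /\<^sub>R fact n)"
proof -
  have "vtk k ((1 / fact n) *\<^sub>R pow5 u n) = Im (phi k ((1 / fact n) *\<^sub>R pow5 u n))"
    by (simp only: phi_Im)
  also have "\<dots> = Im (complex_of_real (1 / fact n) * (phi k u)^n)"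
    by (simp only: phi_scale phi_pow)
  also have "\<dots> = Im ((phi k u)^n /\<^sub>R fact n)"
    by (simp only: scaleR_conv_of_real divide_inverse mult_1)
  finally show ?thesis .
qed

lemma ser_vk: "(\<lambda>n. vk k ((1 / fact n) *\<^sub>R pow5 u n)) sums (exp (vk k u) * cos (vtk k u))"
proof -
  have "(\<lambda>n. Re ((phi k u)^n /\<^sub>R fact n)) sums Re (exp (phi k u))"
    by (rule sums_Re[OF exp_converges])
  then show ?thesis by (simp only: vk_term Re_exp phi_Re phi_Im)
qed

lemma ser_vtk: "(\<lambda>n. vtk k ((1 / fact n) *\<^sub>R pow5 u n)) sums (exp (vk k u) * sin (vtk k u))"
proof -
  have "(\<lambda>n. Im ((phi k u)^n /\<^sub>R fact n)) sums Im (exp (phi k u))"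
    by (rule sums_Im[OF exp_converges])
  then show ?thesis by (simp only: vtk_term Im_exp phi_Re phi_Im)
qed

lemma vplus_vk0: "vplus w = vk 0 w" unfolding vplus_def vk_def by simp
lemma vtk0: "vtk 0 w = 0" unfolding vtk_def by simp

theorem mainTheorem8:
  fixes u :: tc5
  shows "(\<lambda>n. (1 / fact n) *\<^sub>R pow5 u n) sums
     (exp (vplus u) *\<^sub>R eplus
      + exp (vk 1 u) *\<^sub>R (cos (vtk 1 u) *\<^sub>R ek 1 + sin (vtk 1 u) *\<^sub>R etk 1)
      + exp (vk 2 u) *\<^sub>R (cos (vtk 2 u) *\<^sub>R ek 2 + sin (vtk 2 u) *\<^sub>R etk 2))"
proof -
  let ?T = "\<lambda>n. (1 / fact n) *\<^sub>R pow5 u n"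
  have A: "(\<lambda>n. vplus (?T n)) sums exp (vplus u)"
    using ser_vk[of 0 u] by (simp add: vplus_vk0 vtk0)
  have S: "(\<lambda>n. vplus (?T n) *\<^sub>R eplus + vk 1 (?T n) *\<^sub>R ek 1 + vtk 1 (?T n) *\<^sub>R etk 1
      + vk 2 (?T n) *\<^sub>R ek 2 + vtk 2 (?T n) *\<^sub>R etk 2) sums
     (exp (vplus u) *\<^sub>R eplus + (exp (vk 1 u) * cos (vtk 1 u)) *\<^sub>R ek 1
      + (exp (vk 1 u) * sin (vtk 1 u)) *\<^sub>R etk 1
      + (exp (vk 2 u) * cos (vtk 2 u)) *\<^sub>R ek 2 + (exp (vk 2 u) * sin (vtk 2 u)) *\<^sub>R etk 2)"
    by (intro sums_add sums_scaleR_left A ser_vk ser_vtk)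
  have E: "(\<lambda>n. vplus (?T n) *\<^sub>R eplus + vk 1 (?T n) *\<^sub>R ek 1 + vtk 1 (?T n) *\<^sub>R etk 1
      + vk 2 (?T n) *\<^sub>R ek 2 + vtk 2 (?T n) *\<^sub>R etk 2) = ?T"
    by (rule ext, rule recon[symmetric])
  have V: "exp (vplus u) *\<^sub>R eplus + (exp (vk 1 u) * cos (vtk 1 u)) *\<^sub>R ek 1
      + (exp (vk 1 u) * sin (vtk 1 u)) *\<^sub>R etk 1
      + (exp (vk 2 u) * cos (vtk 2 u)) *\<^sub>R ek 2 + (exp (vk 2 u) * sin (vtk 2 u)) *\<^sub>R etk 2
    = exp (vplus u) *\<^sub>R eplus
      + exp (vk 1 u) *\<^sub>R (cos (vtk 1 u) *\<^sub>R ek 1 + sin (vtk 1 u) *\<^sub>R etk 1)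
      + exp (vk 2 u) *\<^sub>R (cos (vtk 2 u) *\<^sub>R ek 2 + sin (vtk 2 u) *\<^sub>R etk 2)"
    by (simp add: scaleR_add_right add.assoc)
  show ?thesis using S unfolding E V .
qed
end
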